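(* Let $n\ge 7$, let $q\equiv 1\pmod 4$, and let $G$ be an almost simple primitive permutation group with socle $G_0=\mathrm{P\Omega}^\epsilon_n(q)$ acting on the set $X$ of non-degenerate $2$-dimensional subspaces of type $\mathrm{O}_2^-$ of the natural module $V_n(q)$. Then $\mathrm{diam}(X,G)\ge 3$.
   Context: $V_n(q)$ carries a non-degenerate quadratic form. A non-degenerate $2$-space is of type $\mathrm{O}_2^+$ if it contains a non-zero singular vector and of type $\mathrm{O}_2^-$ otherwise. An (undirected) orbital graph of $(X,G)$ has as edge set a single $G$-orbit on unordered $2$-subsets of $X$; $\mathrm{diam}(X,G)$ is the maximum diameter of such graphs. *)

theory Defs
  imports Main "HOL-Library.Extended_Nat" "HOL-Library.Cardinality"
begin

text \<open>Vectors of V_n(q) are functions 'n => 'k, with 'k a finite field and CARD('n) = n.\<close>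

definition vzero :: "'n \<Rightarrow> 'k::field" where "vzero = (\<lambda>i. 0)"
definition vadd :: "('n \<Rightarrow> 'k::field) \<Rightarrow> ('n \<Rightarrow> 'k) \<Rightarrow> ('n \<Rightarrow> 'k)" where
  "vadd u v = (\<lambda>i. u i + v i)"
definition smult :: "'k::field \<Rightarrow> ('n \<Rightarrow> 'k) \<Rightarrow> ('n \<Rightarrow> 'k)" where
  "smult c v = (\<lambda>i. c * v i)"

definition bform :: "(('n \<Rightarrow> 'k::field) \<Rightarrow> 'k) \<Rightarrow> ('n \<Rightarrow> 'k) \<Rightarrow> ('n \<Rightarrow> 'k) \<Rightarrow> 'k" where
  "bform Q u v = Q (vadd u v) - Q u - Q v"

definition is_quadratic_form :: "(('n \<Rightarrow> 'k::field) \<Rightarrow> 'k) \<Rightarrow> bool" where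
  "is_quadratic_form Q \<longleftrightarrow>
     (\<forall>c v. Q (smult c v) = c^2 * Q v) \<and>
     (\<forall>u u' v. bform Q (vadd u u') v = bform Q u v + bform Q u' v) \<and>
     (\<forall>c u v. bform Q (smult c u) v = c * bform Q u v)"

text \<open>Non-degenerate (q odd): the polar form has trivial radical.\<close>
definition nondegenerate :: "(('n \<Rightarrow> 'k::field) \<Rightarrow> 'k) \<Rightarrow> bool" where
  "nondegenerate Q \<longleftrightarrow> (\<forall>u. (\<forall>v. bform Q u v = 0) \<longrightarrow> u = vzero)"

definition span2 :: "('n \<Rightarrow> 'k::field) \<Rightarrow> ('n \<Rightarrow> 'k) \<Rightarrow> ('n \<Rightarrow> 'k) set" where
  "span2 u v = {vadd (smult a u) (smult b v) | a b. True}"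

definition two_subspace :: "('n \<Rightarrow> 'k::field) set \<Rightarrow> bool" where
  "two_subspace W \<longleftrightarrow> (\<exists>u v. (\<forall>a b. vadd (smult a u) (smult b v) = vzero \<longrightarrow> a = 0 \<and> b = 0)
                              \<and> W = span2 u v)"

definition nondeg_on :: "(('n \<Rightarrow> 'k::field) \<Rightarrow> 'k) \<Rightarrow> ('n \<Rightarrow> 'k) set \<Rightarrow> bool" where
  "nondeg_on Q W \<longleftrightarrow> (\<forall>w\<in>W. (\<forall>w'\<in>W. bform Q w w' = 0) \<longrightarrow> w = vzero)"

text \<open>Type O_2^-: no non-zero singular vector.\<close>
definition minus_type :: "(('n \<Rightarrow> 'k::field) \<Rightarrow> 'k) \<Rightarrow> ('n \<Rightarrow> 'k) set \<Rightarrow> bool" where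
  "minus_type Q W \<longleftrightarrow> (\<forall>w\<in>W. Q w = 0 \<longrightarrow> w = vzero)"

definition O2minus_spaces :: "(('n \<Rightarrow> 'k::field) \<Rightarrow> 'k) \<Rightarrow> ('n \<Rightarrow> 'k) set set" where
  "O2minus_spaces Q = {W. two_subspace W \<and> nondeg_on Q W \<and> minus_type Q W}"

definition field_aut :: "('k::field \<Rightarrow> 'k) \<Rightarrow> bool" where
  "field_aut \<sigma> \<longleftrightarrow> bij \<sigma> \<and> (\<forall>a b. \<sigma> (a + b) = \<sigma> a + \<sigma> b) \<and> (\<forall>a b. \<sigma> (a * b) = \<sigma> a * \<sigma> b)"

definition semisimilarity :: "(('n \<Rightarrow> 'k::field) \<Rightarrow> 'k) \<Rightarrow> (('n \<Rightarrow> 'k) \<Rightarrow> ('n \<Rightarrow> 'k)) \<Rightarrow> bool" where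
  "semisimilarity Q g \<longleftrightarrow> bij g \<and> (\<forall>u v. g (vadd u v) = vadd (g u) (g v)) \<and>
     (\<exists>\<sigma> \<mu>. field_aut \<sigma> \<and> \<mu> \<noteq> 0 \<and> (\<forall>c v. g (smult c v) = smult (\<sigma> c) (g v)) \<and>
            (\<forall>v. Q (g v) = \<mu> * \<sigma> (Q v)))"

definition isometry :: "(('n \<Rightarrow> 'k::field) \<Rightarrow> 'k) \<Rightarrow> (('n \<Rightarrow> 'k) \<Rightarrow> ('n \<Rightarrow> 'k)) \<Rightarrow> bool" where
  "isometry Q g \<longleftrightarrow> bij g \<and> (\<forall>u v. g (vadd u v) = vadd (g u) (g v)) \<and>
     (\<forall>c v. g (smult c v) = smult c (g v)) \<and> (\<forall>v. Q (g v) = Q v)"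

definition act :: "('v \<Rightarrow> 'v) \<Rightarrow> 'v set \<Rightarrow> 'v set" where
  "act g W = g ` W"

definition is_group_of_maps :: "('v \<Rightarrow> 'v) set \<Rightarrow> bool" where
  "is_group_of_maps H \<longleftrightarrow> id \<in> H \<and> (\<forall>g\<in>H. \<forall>h\<in>H. g \<circ> h \<in> H) \<and> (\<forall>g\<in>H. bij g \<and> inv g \<in> H)"

definition primitive_on :: "('v \<Rightarrow> 'v) set \<Rightarrow> 'v set set \<Rightarrow> bool" where
  "primitive_on H X \<longleftrightarrow> X \<noteq> {} \<and>
     (\<forall>x\<in>X. \<forall>y\<in>X. \<exists>g\<in>H. act g x = y) \<and>
     (\<forall>B. B \<subseteq> X \<longrightarrow> (\<forall>g\<in>H. act g ` B = B \<or> act g ` B \<inter> B = {}) \<longrightarrow> card B \<le> 1 \<or> B = X)"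

definition orbitals :: "('v \<Rightarrow> 'v) set \<Rightarrow> 'v set set \<Rightarrow> 'v set set set set" where
  "orbitals H X = {{{act g x, act g y} | g. g \<in> H} | x y. x \<in> X \<and> y \<in> X \<and> x \<noteq> y}"

definition walk :: "'a set set \<Rightarrow> 'a \<Rightarrow> 'a \<Rightarrow> nat \<Rightarrow> bool" where
  "walk E x y k \<longleftrightarrow> (\<exists>p. length p = Suc k \<and> p ! 0 = x \<and> p ! k = y \<and> (\<forall>i<k. {p ! i, p ! Suc i} \<in> E))"

definition graph_dist :: "'a set set \<Rightarrow> 'a \<Rightarrow> 'a \<Rightarrow> enat" where
  "graph_dist E x y = (if \<exists>k. walk E x y k then enat (LEAST k. walk E x y k) else \<infinity>)"

definition graph_diam :: "'a set \<Rightarrow> 'a set set \<Rightarrow> enat" where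
  "graph_diam X E = Sup {graph_dist E x y | x y. x \<in> X \<and> y \<in> X}"

definition diam_action :: "('v \<Rightarrow> 'v) set \<Rightarrow> 'v set set \<Rightarrow> enat" where
  "diam_action H X = Sup {graph_diam X E | E. E \<in> orbitals H X}"

end

theory Submission
  imports Defs
begin


lemma vadd_comm: "vadd u v = vadd v u"
  by (auto simp: vadd_def add.commute)

definition lin :: "(nat \<Rightarrow> 'n \<Rightarrow> 'k::field) \<Rightarrow> nat \<Rightarrow> (nat \<Rightarrow> 'k) \<Rightarrow> 'n \<Rightarrow> 'k" where
  "lin f m c = (\<lambda>x. \<Sum>j<m. c j * f j x)"

lemma lin_0: "lin f 0 c = vzero" by (simp add: lin_def vzero_def)
lemma lin_Suc: "lin f (Suc m) c = vadd (lin f m c) (smult (c m) (f m))"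
  by (simp add: lin_def vadd_def smult_def)

lemma lin_add: "vadd (lin f m c) (lin f m d) = lin f m (\<lambda>j. c j + d j)"
  by (simp add: lin_def vadd_def sum.distrib distrib_right)

lemma lin_comb: "vadd (smult a (lin f m c)) (smult e (lin f m d)) = lin f m (\<lambda>j. a * c j + e * d j)"
  by (auto simp: lin_def vadd_def smult_def sum_distrib_left sum.distrib algebra_simps)

context fixes Q :: "('n \<Rightarrow> 'k::field) \<Rightarrow> 'k" assumes qf: "is_quadratic_form Q"
begin

lemma Q_smult: "Q (smult c v) = c^2 * Q v" using qf by (simp add: is_quadratic_form_def)
lemma B_add_l: "bform Q (vadd u u') v = bform Q u v + bform Q u' v" using qf by (simp add: is_quadratic_form_def)
lemma B_smult_l: "bform Q (smult c u) v = c * bform Q u v" using qf by (simp add: is_quadratic_form_def)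
lemma B_sym: "bform Q u v = bform Q v u" by (simp add: bform_def vadd_comm)
lemma B_add_r: "bform Q v (vadd u u') = bform Q v u + bform Q v u'"
  by (metis B_sym B_add_l)
lemma B_smult_r: "bform Q v (smult c u) = c * bform Q v u"
  by (metis B_sym B_smult_l)
lemma vzero_smult: "vzero = smult 0 v" by (simp add: vzero_def smult_def)
lemma Q_zero: "Q vzero = 0" by (metis Q_smult vzero_smult mult_zero_left zero_power2)
lemma B_zero_l: "bform Q vzero v = 0" by (metis B_smult_l vzero_smult mult_zero_left)
lemma B_zero_r: "bform Q v vzero = 0" by (metis B_sym B_zero_l)
lemma Q_add: "Q (vadd u v) = Q u + Q v + bform Q u v" by (simp add: bform_def)
lemma B_self: "bform Q v v = 2 * Q v"
proof -
  have "vadd v v = smult 2 v" by (auto simp: vadd_def smult_def)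
  then show ?thesis by (simp add: bform_def Q_smult power2_eq_square)
qed


lemma lin_B: "bform Q (lin f m c) w = (\<Sum>j<m. c j * bform Q (f j) w)"
  by (induction m) (simp_all add: lin_0 lin_Suc B_zero_l B_add_l B_smult_l)

lemma lin_Q: assumes "\<And>i j. i < m \<Longrightarrow> j < m \<Longrightarrow> i \<noteq> j \<Longrightarrow> bform Q (f i) (f j) = 0"
  shows "Q (lin f m c) = (\<Sum>j<m. (c j)^2 * Q (f j))"
  using assms
proof (induction m)
  case 0 then show ?case by (simp add: lin_0 Q_zero)
next
  case (Suc m)
  have "bform Q (lin f m c) (smult (c m) (f m)) = 0"
    using Suc.prems by (simp add: lin_B B_smult_r)
  then show ?case using Suc by (simp add: lin_Suc Q_add Q_smult)
qed

lemma lin_B2: assumes "\<And>i j. i < m \<Longrightarrow> j < m \<Longrightarrow> i \<noteq> j \<Longrightarrow> bform Q (f i) (f j) = 0"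
  shows "bform Q (lin f m c) (lin f m d) = (\<Sum>j<m. 2 * c j * d j * Q (f j))"
proof -
  have "vadd (lin f m c) (lin f m d) = lin f m (\<lambda>j. c j + d j)"
    by (rule lin_add)
  then have "bform Q (lin f m c) (lin f m d) = (\<Sum>j<m. (c j + d j)^2 * Q (f j)) - (\<Sum>j<m. (c j)^2 * Q (f j)) - (\<Sum>j<m. (d j)^2 * Q (f j))"
    by (simp add: bform_def lin_Q[OF assms])
  also have "\<dots> = (\<Sum>j<m. 2 * c j * d j * Q (f j))"
    by (simp add: sum_subtractf[symmetric] power2_eq_square algebra_simps)
  finally show ?thesis .
qed

end


lemma card_field_zero: "of_nat CARD('k::{field,finite}) = (0::'k)"
proof -
  have "(\<Sum>x\<in>(UNIV::'k set). x + 1) = (\<Sum>x\<in>UNIV. x)"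
  proof -
    have "(\<Sum>x\<in>(UNIV::'k set). x + 1) = (\<Sum>x\<in>(\<lambda>x. x+1) ` UNIV. x)"
      by (subst sum.reindex) (auto simp: inj_on_def)
    also have "(\<lambda>x::'k. x+1) ` UNIV = UNIV"
      by (metis surj_def add_diff_cancel diff_add_cancel)
    finally show ?thesis .
  qed
  then show ?thesis by (simp add: sum.distrib)
qed

lemma two_ne_zero_k: assumes "CARD('k::{field,finite}) mod 4 = 1" shows "(2::'k) \<noteq> 0"
proof
  assume h: "(2::'k) = 0"
  obtain m where m: "CARD('k) = 4 * m + 1" using assms by (metis mod_div_mult_eq add.commute mult.commute)
  have "(of_nat (4*m+1)::'k) = 0" using card_field_zero[where 'k='k] m by simp
  moreover have "(of_nat (4*m+1)::'k) = 2 * of_nat (2*m) + 1" by simp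
  ultimately show False using h by simp
qed

lemma card_sq: "CARD('k::{field,finite}) \<le> 2 * card (range (\<lambda>x::'k. x^2))"
proof -
  have "(UNIV::'k set) = (\<Union>s\<in>range (\<lambda>x::'k. x^2). {x. x^2 = s})" by auto
  then have "CARD('k) \<le> (\<Sum>s\<in>range (\<lambda>x::'k. x^2). card {x. x^2 = s})"
    by (metis card_UN_le finite)
  also have "\<dots> \<le> (\<Sum>s\<in>range (\<lambda>x::'k. x^2). 2)"
  proof (rule sum_mono)
    fix s assume "s \<in> range (\<lambda>x::'k. x^2)"
    then obtain r where r: "s = r^2" by auto
    have "{x. x^2 = s} \<subseteq> {r, -r}" using r by (auto simp: power2_eq_iff)
    then have "card {x. x^2 = s} \<le> card {r, -r}" by (intro card_mono) auto
    also have "\<dots> \<le> 2" by (simp add: card_insert_if)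
    finally show "card {x. x^2 = s} \<le> 2" .
  qed
  finally show ?thesis by simp
qed

lemma sum_two_sq:
  fixes a b c :: "'k::{field,finite}"
  assumes "CARD('k) mod 4 = 1" "a \<noteq> 0" "b \<noteq> 0"
  shows "\<exists>x y. a * x^2 + b * y^2 = c"
proof (rule ccontr)
  assume nc: "\<not> ?thesis"
  let ?S = "range (\<lambda>x::'k. x^2)"
  let ?A1 = "(\<lambda>s. a * s) ` ?S" and ?A2 = "(\<lambda>s. c - b * s) ` ?S"
  have c1: "card ?A1 = card ?S" by (rule card_image) (auto simp: inj_on_def assms)
  have c2: "card ?A2 = card ?S" by (rule card_image) (auto simp: inj_on_def assms)
  have "?A1 \<inter> ?A2 = {}"
  proof (rule ccontr)
    assume "?A1 \<inter> ?A2 \<noteq> {}"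
    then obtain x y where "a * x^2 = c - b * y^2" by auto
    then have "a * x^2 + b * y^2 = c" by (simp add: algebra_simps)
    then show False using nc by blast
  qed
  then have "card (?A1 \<union> ?A2) = 2 * card ?S" using c1 c2 by (simp add: card_Un_disjoint)
  moreover have "card (?A1 \<union> ?A2) \<le> CARD('k)" by (rule card_mono) auto
  moreover have "CARD('k) \<le> 2 * card ?S" by (rule card_sq)
  moreover have "odd (CARD('k))" using assms(1) by (metis dvd_mod_iff even_numeral odd_one)
  ultimately show False by presburger
qed



context fixes Q :: "('n::finite \<Rightarrow> 'k::{field,finite}) \<Rightarrow> 'k"
  assumes qf: "is_quadratic_form Q" and nd: "nondegenerate Q" and dimn: "CARD('n) \<ge> 5"
begin

lemma perp_exists: fixes s :: "nat \<Rightarrow> 'n \<Rightarrow> 'k" shows "\<exists>x. x \<noteq> vzero \<and> (\<forall>i<4. bform Q x (s i) = 0)"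
proof -
  define \<phi> where "\<phi> = (\<lambda>x. (bform Q x (s 0), bform Q x (s 1), bform Q x (s 2), bform Q x (s 3)))"
  have "\<not> inj \<phi>"
  proof
    assume "inj \<phi>"
    then have "card (UNIV :: ('n \<Rightarrow> 'k) set) \<le> card (UNIV :: ('k \<times> 'k \<times> 'k \<times> 'k) set)"
      by (metis card_inj_on_le finite subset_UNIV)
    also have "\<dots> = CARD('k)^4" by (simp add: card_cartesian_product power4_eq_xxxx flip: UNIV_Times_UNIV)
    finally have le: "CARD('k)^CARD('n) \<le> CARD('k)^4" by (simp add: card_fun)
    have "(1::'k) \<noteq> 0" by simp
    then have "card {0::'k, 1} \<le> CARD('k)" by (intro card_mono) auto
    then have "2 \<le> CARD('k)" by simp
    then have "CARD('k)^4 < CARD('k)^CARD('n)" using dimn by (intro power_strict_increasing) auto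
    then show False using le by simp
  qed
  then obtain x y where xy: "x \<noteq> y" "\<phi> x = \<phi> y" unfolding inj_def by blast
  define d where "d = vadd x (smult (-1) y)"
  have "d \<noteq> vzero"
  proof
    assume "d = vzero"
    then have "\<And>i. x i - y i = 0" by (metis d_def vadd_def smult_def vzero_def mult_minus1 diff_conv_add_uminus)
    then show False using xy(1) by auto
  qed
  moreover have "\<forall>i<4. bform Q d (s i) = 0"
  proof (intro allI impI)
    fix i :: nat assume "i < 4"
    then have "i = 0 \<or> i = 1 \<or> i = 2 \<or> i = 3" by auto
    then have "bform Q x (s i) = bform Q y (s i)" using xy(2) by (auto simp: \<phi>_def)
    then show "bform Q d (s i) = 0" by (simp add: d_def B_add_l[OF qf] B_smult_l[OF qf])
  qed
  ultimately show ?thesis by blast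
qed

lemma aniso_perp:
  fixes s :: "nat \<Rightarrow> 'n \<Rightarrow> 'k"
  assumes orth: "\<And>i j. i < 4 \<Longrightarrow> j < 4 \<Longrightarrow> i \<noteq> j \<Longrightarrow> bform Q (s i) (s j) = 0"
    and nz: "\<And>i. i < 4 \<Longrightarrow> bform Q (s i) (s i) = 0 \<Longrightarrow> s i = vzero"
  shows "\<exists>e. Q e \<noteq> 0 \<and> (\<forall>i<4. bform Q e (s i) = 0)"
proof -
  obtain x where x: "x \<noteq> vzero" "\<forall>i<4. bform Q x (s i) = 0" using perp_exists by blast
  show ?thesis
  proof (cases "Q x = 0")
    case False then show ?thesis using x by blast
  next
    case True
    obtain w where w: "bform Q x w \<noteq> 0" using nd x(1) unfolding nondegenerate_def by blast
    define k where "k = (\<lambda>i. - (bform Q w (s i) / bform Q (s i) (s i)))"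
    define y where "y = vadd w (lin s 4 k)"
    have yperp: "\<forall>j<4. bform Q y (s j) = 0"
    proof (intro allI impI)
      fix j :: nat assume j: "j < 4"
      have "(\<Sum>i<4. k i * bform Q (s i) (s j)) = (\<Sum>i<4. if i = j then k j * bform Q (s j) (s j) else 0)"
        by (rule sum.cong) (auto simp: orth j)
      also have "\<dots> = k j * bform Q (s j) (s j)" using j by simp
      finally have "bform Q y (s j) = bform Q w (s j) + k j * bform Q (s j) (s j)"
        by (simp add: y_def B_add_l[OF qf] lin_B[OF qf])
      also have "\<dots> = 0"
      proof (cases "bform Q (s j) (s j) = 0")
        case True
        then have "s j = vzero" using nz j by blast
        then show ?thesis using True by (simp add: B_zero_r[OF qf])
      next
        case False then show ?thesis by (simp add: k_def)
      qed
      finally show "bform Q y (s j) = 0" .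
    qed
    have "bform Q x y = bform Q x w"
      using x(2) by (simp add: y_def B_add_r[OF qf] B_sym[OF qf, of x "lin s 4 k"] lin_B[OF qf] B_sym[OF qf, of "s _" x])
    then have bxy: "bform Q x y \<noteq> 0" using w by simp
    show ?thesis
    proof (cases "Q y = 0")
      case False then show ?thesis using yperp by blast
    next
      case True
      have "Q (vadd x y) \<noteq> 0" using bxy True \<open>Q x = 0\<close> by (simp add: Q_add[OF qf])
      moreover have "\<forall>i<4. bform Q (vadd x y) (s i) = 0" using x(2) yperp by (simp add: B_add_l[OF qf])
      ultimately show ?thesis by blast
    qed
  qed
qed

end


definition dimle2 :: "('n \<Rightarrow> 'k::field) set \<Rightarrow> bool" where
  "dimle2 Z \<longleftrightarrow> (\<forall>a\<in>Z. \<forall>b\<in>Z. a \<noteq> vzero \<longrightarrow> (\<forall>c. b \<noteq> smult c a) \<longrightarrow>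
      (\<forall>z\<in>Z. \<exists>c d. z = vadd (smult c a) (smult d b)))"

definition Prel :: "(('n \<Rightarrow> 'k::field) \<Rightarrow> 'k) \<Rightarrow> ('n \<Rightarrow> 'k) set \<Rightarrow> ('n \<Rightarrow> 'k) set \<Rightarrow> bool" where
  "Prel Q W Z \<longleftrightarrow> W \<noteq> Z \<and> dimle2 W \<and> dimle2 Z \<and> (\<exists>x. x \<noteq> vzero \<and> x \<in> W \<and> x \<in> Z) \<and>
     (\<exists>w\<in>W. \<exists>z\<in>Z. vadd w z \<noteq> vzero \<and> (\<forall>y\<in>W. bform Q (vadd w z) y = 0) \<and> (\<forall>y\<in>Z. bform Q (vadd w z) y = 0))"

lemma span2_dimle2: "dimle2 (span2 u v)"
  unfolding dimle2_def
proof (intro ballI impI allI)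
  fix a b z
  assume "a \<in> span2 u v" "b \<in> span2 u v" "z \<in> span2 u v" and anz: "a \<noteq> vzero" and nm: "\<forall>c. b \<noteq> smult c a"
  then obtain a1 a2 b1 b2 c1 c2 where
    a: "a = (\<lambda>i. a1 * u i + a2 * v i)" and b: "b = (\<lambda>i. b1 * u i + b2 * v i)" and
    z: "z = (\<lambda>i. c1 * u i + c2 * v i)"
    by (auto simp: span2_def vadd_def smult_def)
  show "\<exists>c d. z = vadd (smult c a) (smult d b)"
  proof (cases "a1 * b2 - a2 * b1 = 0")
    case True
    have False
    proof (cases "a1 = 0")
      case False
      have "b = smult (b1/a1) a" using True False
        by (auto simp: a b smult_def field_simps)
      then show False using nm by blast
    next
      case a10: True
      then have "a2 \<noteq> 0" using anz by (auto simp: a vzero_def)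
      then have "b1 = 0" using True a10 by simp
      then have "b = smult (b2/a2) a" using \<open>a2 \<noteq> 0\<close> a10 by (auto simp: a b smult_def)
      then show False using nm by blast
    qed
    then show ?thesis ..
  next
    case False
    let ?D = "a1 * b2 - a2 * b1"
    have "z = vadd (smult ((c1 * b2 - c2 * b1) / ?D) a) (smult ((a1 * c2 - a2 * c1) / ?D) b)"
    proof (rule ext)
      fix i
      have num: "(c1 * b2 - c2 * b1) * (a1 * u i + a2 * v i) + (a1 * c2 - a2 * c1) * (b1 * u i + b2 * v i)
          = ?D * (c1 * u i + c2 * v i)" by (simp add: algebra_simps)
      have "vadd (smult ((c1 * b2 - c2 * b1) / ?D) a) (smult ((a1 * c2 - a2 * c1) / ?D) b) i
          = ((c1 * b2 - c2 * b1) * (a1 * u i + a2 * v i) + (a1 * c2 - a2 * c1) * (b1 * u i + b2 * v i)) / ?D"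
        by (simp add: a b vadd_def smult_def add_divide_distrib)
      also have "\<dots> = c1 * u i + c2 * v i" using False by (simp only: num) simp
      finally show "z i = vadd (smult ((c1 * b2 - c2 * b1) / ?D) a) (smult ((a1 * c2 - a2 * c1) / ?D) b) i"
        by (simp add: z)
    qed
    then show ?thesis by blast
  qed
qed

lemma Prel_sym: "Prel Q W Z \<Longrightarrow> Prel Q Z W"
  unfolding Prel_def by (metis vadd_comm)

lemma span2_closed:
  assumes "x \<in> span2 u v" "y \<in> span2 u v" shows "vadd x (smult c y) \<in> span2 u v" "smult c y \<in> span2 u v"
proof -
  from assms obtain a1 a2 b1 b2 where x: "x = vadd (smult a1 u) (smult a2 v)" and y: "y = vadd (smult b1 u) (smult b2 v)"
    by (auto simp: span2_def)
  have "vadd x (smult c y) = vadd (smult (a1 + c*b1) u) (smult (a2 + c*b2) v)"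
    by (auto simp: x y vadd_def smult_def algebra_simps)
  then show "vadd x (smult c y) \<in> span2 u v" by (auto simp: span2_def)
  have "smult c y = vadd (smult (c*b1) u) (smult (c*b2) v)"
    by (auto simp: y vadd_def smult_def algebra_simps)
  then show "smult c y \<in> span2 u v" by (auto simp: span2_def)
qed

lemma semisim_zero: assumes "\<forall>u v. g (vadd u v) = vadd (g u) (g v)" shows "g vzero = vzero"
proof -
  have "vadd vzero vzero = vzero" by (simp add: vadd_def vzero_def)
  then have "g vzero = vadd (g vzero) (g vzero)" using assms by metis
  then have "\<And>i. g vzero i = g vzero i + g vzero i" by (metis vadd_def)
  then have "\<And>i. g vzero i = 0" by (metis add_cancel_right_right)
  then show ?thesis by (auto simp: vzero_def)
qed

lemma aut_zero: assumes "field_aut \<sigma>" shows "\<sigma> 0 = 0"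
  using assms unfolding field_aut_def by (metis add_cancel_right_right add_0)

lemma aut_diff: assumes "field_aut \<sigma>" shows "\<sigma> (a - b) = \<sigma> a - \<sigma> b"
  using assms unfolding field_aut_def by (metis diff_add_cancel eq_diff_eq)

lemma semisim_B:
  assumes "semisimilarity Q g"
  shows "\<exists>\<sigma> \<mu>. field_aut \<sigma> \<and> (\<forall>t y. bform Q (g t) (g y) = \<mu> * \<sigma> (bform Q t y)) \<and>
     (\<forall>c v. g (smult c v) = smult (\<sigma> c) (g v))"
proof -
  from assms obtain \<sigma> \<mu> where s: "field_aut \<sigma>" "\<forall>c v. g (smult c v) = smult (\<sigma> c) (g v)" "\<forall>v. Q (g v) = \<mu> * \<sigma> (Q v)"
    and add: "\<forall>u v. g (vadd u v) = vadd (g u) (g v)"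
    unfolding semisimilarity_def by blast
  have sadd: "\<And>a b. \<sigma> (a + b) = \<sigma> a + \<sigma> b" using s(1) unfolding field_aut_def by blast
  have "\<forall>t y. bform Q (g t) (g y) = \<mu> * \<sigma> (bform Q t y)"
    using s add sadd by (simp add: bform_def aut_diff[OF s(1)] algebra_simps flip: add)
  then show ?thesis using s by blast
qed

lemma Prel_inv:
  assumes g: "semisimilarity Q g" and P: "Prel Q W Z"
  shows "Prel Q (act g W) (act g Z)"
proof -
  from g have bij: "bij g" and add: "\<forall>u v. g (vadd u v) = vadd (g u) (g v)" unfolding semisimilarity_def by auto
  from semisim_B[OF g] obtain \<sigma> \<mu> where s: "field_aut \<sigma>" "\<forall>t y. bform Q (g t) (g y) = \<mu> * \<sigma> (bform Q t y)"
    "\<forall>c v. g (smult c v) = smult (\<sigma> c) (g v)" by blast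
  have inj: "inj g" using bij bij_is_inj by blast
  have g0: "g vzero = vzero" by (rule semisim_zero[OF add])
  have gnz: "\<And>x. x \<noteq> vzero \<Longrightarrow> g x \<noteq> vzero" using inj g0 by (metis injD)
  have dim: "dimle2 (g ` Z)" if "dimle2 Z" for Z
    unfolding dimle2_def
  proof (intro ballI impI allI)
    fix a' b' z' assume "a' \<in> g ` Z" "b' \<in> g ` Z" "z' \<in> g ` Z" "a' \<noteq> vzero" and nm: "\<forall>c. b' \<noteq> smult c a'"
    then obtain a b z where abz: "a \<in> Z" "b \<in> Z" "z \<in> Z" "a' = g a" "b' = g b" "z' = g z" by blast
    have "a \<noteq> vzero" using \<open>a' \<noteq> vzero\<close> abz g0 by auto
    moreover have "\<forall>c. b \<noteq> smult c a" using nm abz s(3) by metis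
    moreover have "\<forall>a\<in>Z. \<forall>b\<in>Z. a \<noteq> vzero \<longrightarrow> (\<forall>c. b \<noteq> smult c a) \<longrightarrow>
      (\<forall>z\<in>Z. \<exists>c d. z = vadd (smult c a) (smult d b))" using that unfolding dimle2_def .
    ultimately obtain c d where "z = vadd (smult c a) (smult d b)" using abz(1,2,3) by blast
    then have "z' = vadd (smult (\<sigma> c) a') (smult (\<sigma> d) b')" using abz add s(3) by simp
    then show "\<exists>c d. z' = vadd (smult c a') (smult d b')" by blast
  qed
  from P obtain x w z where ne: "W \<noteq> Z" and d: "dimle2 W" "dimle2 Z" and x: "x \<noteq> vzero" "x \<in> W" "x \<in> Z"
    and wz: "w \<in> W" "z \<in> Z" "vadd w z \<noteq> vzero" "\<forall>y\<in>W. bform Q (vadd w z) y = 0" "\<forall>y\<in>Z. bform Q (vadd w z) y = 0"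
    unfolding Prel_def by blast
  have "act g W \<noteq> act g Z" using ne inj by (simp add: act_def inj_image_eq_iff)
  moreover have "dimle2 (act g W)" "dimle2 (act g Z)" using dim d by (auto simp: act_def)
  moreover have "g x \<noteq> vzero \<and> g x \<in> act g W \<and> g x \<in> act g Z" using x gnz by (auto simp: act_def)
  moreover have "vadd (g w) (g z) \<noteq> vzero" using wz(3) gnz add by metis
  moreover have "\<forall>y\<in>act g W. bform Q (vadd (g w) (g z)) y = 0"
    using wz(4) s(2) add aut_zero[OF s(1)] by (auto simp: act_def simp flip: add)
  moreover have "\<forall>y\<in>act g Z. bform Q (vadd (g w) (g z)) y = 0"
    using wz(5) s(2) add aut_zero[OF s(1)] by (auto simp: act_def simp flip: add)
  ultimately show ?thesis unfolding Prel_def act_def using wz(1,2) by blast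
qed



context fixes Q :: "('n \<Rightarrow> 'k::field) \<Rightarrow> 'k" assumes qf: "is_quadratic_form Q" and two: "(2::'k) \<noteq> 0"
begin

lemma lc_zero: "vadd (smult 0 u) (smult 0 v) = vzero" by (simp add: vadd_def smult_def vzero_def)

lemma plane_in_X:
  assumes an: "\<forall>a e. Q (vadd (smult a u) (smult e v)) = 0 \<longrightarrow> a = 0 \<and> e = 0"
  shows "span2 u v \<in> O2minus_spaces Q"
proof -
  have ind: "\<forall>a b. vadd (smult a u) (smult b v) = vzero \<longrightarrow> a = 0 \<and> b = 0"
    using an Q_zero[OF qf] by metis
  have mt: "minus_type Q (span2 u v)"
    unfolding minus_type_def span2_def using an lc_zero by blast
  have "nondeg_on Q (span2 u v)"
    unfolding nondeg_on_def
  proof (intro ballI impI)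
    fix w assume w: "w \<in> span2 u v" and "\<forall>w'\<in>span2 u v. bform Q w w' = 0"
    then have "bform Q w w = 0" by blast
    then have "Q w = 0" using two B_self[OF qf] by simp
    then show "w = vzero" using mt w unfolding minus_type_def by blast
  qed
  then show ?thesis using ind mt unfolding O2minus_spaces_def two_subspace_def by blast
qed

lemma no_common:
  assumes nW: "nondeg_on Q (span2 u v)" and mt: "minus_type Q W2"
    and perp: "\<forall>x\<in>W2. \<forall>y\<in>span2 u v. bform Q x y = 0"
  shows "\<not> Prel Q (span2 u v) W2" "\<not> (Prel Q (span2 u v) Z \<and> Prel Q Z W2)"
proof -
  let ?W = "span2 u v"
  have inter: "x = vzero" if "x \<in> ?W" "x \<in> W2" for x
    using nW perp that unfolding nondeg_on_def by blast
  show "\<not> Prel Q ?W W2" using inter unfolding Prel_def by blast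
  show "\<not> (Prel Q ?W Z \<and> Prel Q Z W2)"
  proof
    assume h: "Prel Q ?W Z \<and> Prel Q Z W2"
    then obtain a b where a: "a \<noteq> vzero" "a \<in> ?W" "a \<in> Z" and b: "b \<noteq> vzero" "b \<in> Z" "b \<in> W2"
      unfolding Prel_def by blast
    from h obtain w z where wz: "w \<in> ?W" "z \<in> Z" "vadd w z \<noteq> vzero" "\<forall>y\<in>?W. bform Q (vadd w z) y = 0"
      "\<forall>y\<in>Z. bform Q (vadd w z) y = 0" and dZ: "dimle2 Z"
      unfolding Prel_def by blast
    have nm: "\<forall>c. b \<noteq> smult c a"
    proof
      fix c show "b \<noteq> smult c a" using inter[of b] b span2_closed(2)[OF a(2) a(2), of c] by blast
    qed
    obtain c d where z: "z = vadd (smult c a) (smult d b)"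
      using dZ a b nm wz(2) unfolding dimle2_def by blast
    define w' where "w' = vadd w (smult c a)"
    have w'W: "w' \<in> ?W" unfolding w'_def by (rule span2_closed(1)[OF wz(1) a(2)])
    have t: "vadd w z = vadd w' (smult d b)" by (auto simp: z w'_def vadd_def add.assoc)
    have "\<forall>y\<in>?W. bform Q w' y = 0"
    proof
      fix y assume y: "y \<in> ?W"
      have "bform Q (vadd w z) y = bform Q w' y + d * bform Q b y"
        by (simp add: t B_add_l[OF qf] B_smult_l[OF qf])
      then show "bform Q w' y = 0" using wz(4) y perp b(3) by simp
    qed
    then have "w' = vzero" using nW w'W unfolding nondeg_on_def by blast
    then have t2: "vadd w z = smult d b" unfolding t by (auto simp: vadd_def vzero_def)
    have "d \<noteq> 0" using t2 wz(3) by (auto simp: smult_def vzero_def)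
    moreover have "bform Q (vadd w z) b = d * (2 * Q b)" by (simp add: t2 B_smult_l[OF qf] B_self[OF qf])
    ultimately have "Q b = 0" using wz(5) b(2) two by simp
    then show False using mt b unfolding minus_type_def by blast
  qed
qed

end

lemma dist_ge3:
  assumes edges: "\<And>s t. {s, t} \<in> E \<Longrightarrow> R s t"
    and ne: "x \<noteq> y" and n1: "\<not> R x y" and n2: "\<And>z. \<not> (R x z \<and> R z y)"
  shows "graph_dist E x y \<ge> 3"
proof (cases "\<exists>k. walk E x y k")
  case False then show ?thesis by (simp add: graph_dist_def)
next
  case True
  let ?k = "LEAST k. walk E x y k"
  have wk: "walk E x y ?k" using True by (metis LeastI)
  then obtain p where p: "length p = Suc ?k" "p ! 0 = x" "p ! ?k = y" "\<forall>i<?k. {p ! i, p ! Suc i} \<in> E"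
    unfolding walk_def by blast
  have "?k \<noteq> 0"
  proof
    assume "?k = 0" then show False using p(2,3) ne by simp
  qed
  moreover have "?k \<noteq> 1" using p n1 edges by force
  moreover have "?k \<noteq> 2"
  proof
    assume k2: "?k = 2"
    then have "{p ! 0, p ! 1} \<in> E" "{p ! 1, p ! 2} \<in> E" using p(4) by (simp_all add: numeral_2_eq_2)
    then show False using n2 edges p(2,3) k2 by metis
  qed
  ultimately have "?k \<ge> 3" by linarith
  then show ?thesis using True by (simp add: graph_dist_def)
qed



lemma sum5: "(\<Sum>j<(5::nat). g j) = g 0 + g 1 + g 2 + g 3 + (g 4 :: 'a::comm_monoid_add)"
  by (simp add: eval_nat_numeral add.assoc)


context fixes Q :: "('n::finite \<Rightarrow> 'k::{field,finite}) \<Rightarrow> 'k"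
  assumes qf: "is_quadratic_form Q" and nd: "nondegenerate Q" and dimn: "CARD('n) \<ge> 5"
   and two: "(2::'k) \<noteq> 0"
begin

lemma perp4:
  assumes o: "bform Q s0 s1 = 0" "bform Q s0 s2 = 0" "bform Q s0 s3 = 0" "bform Q s1 s2 = 0"
     "bform Q s1 s3 = 0" "bform Q s2 s3 = 0"
   and n: "bform Q s0 s0 = 0 \<Longrightarrow> s0 = vzero" "bform Q s1 s1 = 0 \<Longrightarrow> s1 = vzero"
     "bform Q s2 s2 = 0 \<Longrightarrow> s2 = vzero" "bform Q s3 s3 = 0 \<Longrightarrow> s3 = vzero"
  shows "\<exists>e. Q e \<noteq> 0 \<and> bform Q e s0 = 0 \<and> bform Q e s1 = 0 \<and> bform Q e s2 = 0 \<and> bform Q e s3 = 0"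
proof -
  define s where "s = (\<lambda>i::nat. if i = 0 then s0 else if i = 1 then s1 else if i = 2 then s2 else s3)"
  have o': "bform Q s1 s0 = 0" "bform Q s2 s0 = 0" "bform Q s3 s0 = 0" "bform Q s2 s1 = 0"
     "bform Q s3 s1 = 0" "bform Q s3 s2 = 0" using o B_sym[OF qf] by metis+
  have less4: "\<And>i::nat. i < 4 \<longleftrightarrow> i = 0 \<or> i = 1 \<or> i = 2 \<or> i = 3" by auto
  have "\<exists>e. Q e \<noteq> 0 \<and> (\<forall>i<4. bform Q e (s i) = 0)"
  proof (rule aniso_perp[OF qf nd dimn])
    fix i j :: nat assume "i < 4" "j < 4" "i \<noteq> j"
    then show "bform Q (s i) (s j) = 0" unfolding less4 using o o' by (elim disjE) (simp_all add: s_def)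
  next
    fix i :: nat assume "i < 4" "bform Q (s i) (s i) = 0"
    then show "s i = vzero" unfolding less4 using n by (elim disjE) (simp_all add: s_def)
  qed
  then obtain e where e: "Q e \<noteq> 0" "\<forall>i<4. bform Q e (s i) = 0" by blast
  have "bform Q e (s 0) = 0" "bform Q e (s 1) = 0" "bform Q e (s 2) = 0" "bform Q e (s 3) = 0"
    using e(2) by auto
  then show ?thesis using e(1) by (auto simp: s_def)
qed

lemma five_vectors:
  assumes uv: "bform Q u v = 0" "Q u \<noteq> 0" "Q v \<noteq> 0"
  shows "\<exists>f. f 0 = u \<and> f 1 = v \<and> (\<forall>i<(5::nat). Q (f i) \<noteq> 0) \<and> (\<forall>i<(5::nat). \<forall>j<(5::nat). i \<noteq> j \<longrightarrow> bform Q (f i) (f j) = 0)"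
proof -
  have Bs: "bform Q x x = 0 \<Longrightarrow> x = vzero" if "Q x \<noteq> 0" for x using that two B_self[OF qf] by simp
  have Bz: "bform Q vzero vzero = 0" "\<And>x. bform Q x vzero = 0" by (simp_all add: B_zero_l[OF qf] B_zero_r[OF qf])
  obtain e2 where e2: "Q e2 \<noteq> 0" "bform Q e2 u = 0" "bform Q e2 v = 0"
    using perp4[of u v vzero vzero] uv Bs Bz by blast
  have e2s: "bform Q u e2 = 0" "bform Q v e2 = 0" using e2 B_sym[OF qf] by metis+
  obtain e3 where e3: "Q e3 \<noteq> 0" "bform Q e3 u = 0" "bform Q e3 v = 0" "bform Q e3 e2 = 0"
    using perp4[of u v e2 vzero] uv Bs Bz e2 e2s by blast
  have e3s: "bform Q u e3 = 0" "bform Q v e3 = 0" "bform Q e2 e3 = 0" using e3 B_sym[OF qf] by metis+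
  obtain e4 where e4: "Q e4 \<noteq> 0" "bform Q e4 u = 0" "bform Q e4 v = 0" "bform Q e4 e2 = 0" "bform Q e4 e3 = 0"
    using perp4[of u v e2 e3] uv Bs e2 e2s e3 e3s by blast
  have e4s: "bform Q u e4 = 0" "bform Q v e4 = 0" "bform Q e2 e4 = 0" "bform Q e3 e4 = 0" using e4 B_sym[OF qf] by metis+
  have vu: "bform Q v u = 0" using uv B_sym[OF qf] by metis
  define f where "f = (\<lambda>i::nat. if i = 0 then u else if i = 1 then v else if i = 2 then e2 else if i = 3 then e3 else e4)"
  have less5: "\<And>i::nat. i < 5 \<longleftrightarrow> i = 0 \<or> i = 1 \<or> i = 2 \<or> i = 3 \<or> i = 4" by auto
  have "\<forall>i<5. Q (f i) \<noteq> 0" unfolding less5 using uv e2 e3 e4 by (auto simp: f_def)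
  moreover have "\<forall>i<5. \<forall>j<5. i \<noteq> j \<longrightarrow> bform Q (f i) (f j) = 0"
  proof (intro allI impI)
    fix i j :: nat assume "i < 5" "j < 5" "i \<noteq> j"
    then show "bform Q (f i) (f j) = 0" unfolding less5 using uv vu e2 e2s e3 e3s e4 e4s
      by (elim disjE) (simp_all add: f_def)
  qed
  moreover have "f 0 = u" "f 1 = v" by (simp_all add: f_def)
  ultimately show ?thesis by blast
qed

end


lemma mem_span_lin: "lin f m (\<lambda>j. a * c j + e * d j) \<in> span2 (lin f m c) (lin f m d)"
  unfolding span2_def by (auto simp flip: lin_comb)

lemma span_lin_elem: "y \<in> span2 (lin f m c) (lin f m d) \<Longrightarrow> \<exists>a e. y = lin f m (\<lambda>j. a * c j + e * d j)"
  unfolding span2_def by (auto simp: lin_comb)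

theorem mainTheorem14:
  fixes Q :: "('n::finite \<Rightarrow> 'k::{field,finite}) \<Rightarrow> 'k"
    and H :: "(('n \<Rightarrow> 'k) \<Rightarrow> ('n \<Rightarrow> 'k)) set"
  assumes "CARD('n) \<ge> 7"
    and "CARD('k) mod 4 = 1"
    and "is_quadratic_form Q"
    and "nondegenerate Q"
    and "H \<subseteq> {g. semisimilarity Q g}"
    and "is_group_of_maps H"
    and "\<forall>a b. isometry Q a \<and> isometry Q b \<longrightarrow> a \<circ> b \<circ> inv a \<circ> inv b \<in> H"
    and "primitive_on H (O2minus_spaces Q)"
  shows "diam_action H (O2minus_spaces Q) \<ge> 3"
proof -
  let ?X = "O2minus_spaces Q"
  have two: "(2::'k) \<noteq> 0" using assms(2) by (rule two_ne_zero_k)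
  have dim5: "CARD('n) \<ge> 5" using assms(1) by simp
  note qf = assms(3) and nd = assms(4)
  obtain W0 where W0: "W0 \<in> ?X" using assms(8) unfolding primitive_on_def by blast
  then obtain u0 v0 where ind: "\<forall>a b. vadd (smult a u0) (smult b v0) = vzero \<longrightarrow> a = 0 \<and> b = 0"
     and W0s: "W0 = span2 u0 v0" and mt0: "minus_type Q W0"
    unfolding O2minus_spaces_def two_subspace_def by blast
  have inW0: "vadd (smult a u0) (smult b v0) \<in> W0" for a b unfolding W0s span2_def by blast
  have u0eq: "vadd (smult 1 u0) (smult 0 v0) = u0" by (simp add: vadd_def smult_def)
  have u0nz: "u0 \<noteq> vzero" using ind u0eq by (metis one_neq_zero)
  have qu0: "Q u0 \<noteq> 0" using mt0 inW0[of 1 0] u0eq u0nz unfolding minus_type_def by metis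
  define k0 where "k0 = bform Q v0 u0 / bform Q u0 u0"
  define v where "v = vadd v0 (smult (-k0) u0)"
  have Buu: "bform Q u0 u0 \<noteq> 0" using B_self[OF qf] two qu0 by simp
  have Buv: "bform Q u0 v = 0"
    unfolding v_def by (simp add: B_add_r[OF qf] B_smult_r[OF qf] k0_def B_sym[OF qf, of u0 v0] Buu)
  have comb: "vadd (smult a u0) (smult e v) = vadd (smult (a - e*k0) u0) (smult e v0)" for a e
    by (auto simp: v_def vadd_def smult_def algebra_simps)
  have Qcomb: "Q (vadd (smult a u0) (smult e v)) = a^2 * Q u0 + e^2 * Q v" for a e
    by (simp add: Q_add[OF qf] Q_smult[OF qf] B_smult_l[OF qf] B_smult_r[OF qf] Buv)
  have aniso: "a = 0 \<and> e = 0" if h: "a^2 * Q u0 + e^2 * Q v = 0" for a e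
  proof -
    have "Q (vadd (smult (a - e*k0) u0) (smult e v0)) = Q (vadd (smult a u0) (smult e v))" by (simp only: comb)
    also have "\<dots> = 0" by (simp only: Qcomb h)
    finally have e1: "Q (vadd (smult (a - e*k0) u0) (smult e v0)) = 0" .
    have "vadd (smult (a - e*k0) u0) (smult e v0) = vzero" using mt0 e1 inW0[of "a - e*k0" e] unfolding minus_type_def by blast
    then show ?thesis using ind[rule_format, of "a - e*k0" e] by simp
  qed
  have qv: "Q v \<noteq> 0" using aniso[of 0 1] by auto
  obtain f where f: "f 0 = u0" "f 1 = v" "\<forall>i<(5::nat). Q (f i) \<noteq> 0"
      "\<forall>i<(5::nat). \<forall>j<(5::nat). i \<noteq> j \<longrightarrow> bform Q (f i) (f j) = 0"
    using five_vectors[OF qf nd dim5 two Buv qu0 qv] by blast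
  have orth: "\<And>i j. i < 5 \<Longrightarrow> j < 5 \<Longrightarrow> i \<noteq> j \<Longrightarrow> bform Q (f i) (f j) = 0" using f(4) by blast
  define q where "q = (\<lambda>i. Q (f i))"
  have QL: "Q (lin f 5 c) = (c 0)^2 * q 0 + (c 1)^2 * q 1 + (c 2)^2 * q 2 + (c 3)^2 * q 3 + (c 4)^2 * q 4" for c
  proof -
    have "Q (lin f 5 c) = (\<Sum>j<5. (c j)^2 * Q (f j))" by (rule lin_Q[OF qf orth])
    then show ?thesis unfolding sum5 q_def .
  qed
  have BL: "bform Q (lin f 5 c) (lin f 5 d) = 2 * c 0 * d 0 * q 0 + 2 * c 1 * d 1 * q 1 + 2 * c 2 * d 2 * q 2
     + 2 * c 3 * d 3 * q 3 + 2 * c 4 * d 4 * q 4" for c d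
  proof -
    have "bform Q (lin f 5 c) (lin f 5 d) = (\<Sum>j<5. 2 * c j * d j * Q (f j))" by (rule lin_B2[OF qf orth])
    then show ?thesis unfolding sum5 q_def .
  qed
  have q0: "q 0 = Q u0" and q1: "q 1 = Q v" using f by (simp_all add: q_def)
  have q2: "q 2 \<noteq> 0" and q3: "q 3 \<noteq> 0" and q4: "q 4 \<noteq> 0" unfolding q_def using f(3) by auto
  have anq: "a = 0 \<and> e = 0" if "a^2 * q 0 + e^2 * q 1 = 0" for a e
    using aniso[of a e] that unfolding q0 q1 by blast
  obtain xr yr where xy: "q 2 * xr^2 + q 3 * yr^2 = - q 4" using sum_two_sq[OF assms(2) q2 q3] by blast
  obtain x' y' where xy': "q 2 * x'^2 + q 3 * y'^2 = q 0" using sum_two_sq[OF assms(2) q2 q3] by blast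
  have qf1: "q 2 * q 3 * q 0 \<noteq> 0" using q2 q3 qu0 q0 by simp
  obtain s t where st: "(q 2 * q 3 * q 0) * s^2 + q 4 * t^2 = q 1" using sum_two_sq[OF assms(2) qf1 q4] by blast
  define d0 where "d0 = (\<lambda>j::nat. if j = 0 then (1::'k) else 0)"
  define d1 where "d1 = (\<lambda>j::nat. if j = 1 then (1::'k) else 0)"
  define d4 where "d4 = (\<lambda>j::nat. if j = 4 then (1::'k) else 0)"
  define rho where "rho = (\<lambda>j::nat. if j = 2 then xr else if j = 3 then yr else if j = 4 then 1 else 0)"
  define d1r where "d1r = (\<lambda>j::nat. if j = 1 then 1 else if j = 2 then xr else if j = 3 then yr else if j = 4 then 1 else 0)"
  define pi1 where "pi1 = (\<lambda>j::nat. if j = 2 then x' else if j = 3 then y' else 0)"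
  define pi2 where "pi2 = (\<lambda>j::nat. if j = 2 then s * q 3 * y' else if j = 3 then - (s * q 2 * x') else if j = 4 then t else 0)"
  define X0 where "X0 = span2 (lin f 5 d0) (lin f 5 d1)"
  define Y0 where "Y0 = span2 (lin f 5 d0) (lin f 5 d1r)"
  define W2 where "W2 = span2 (lin f 5 pi1) (lin f 5 pi2)"
  have X0X: "X0 \<in> ?X" unfolding X0_def
  proof (rule plane_in_X[OF qf two], intro allI impI)
    fix a e assume "Q (vadd (smult a (lin f 5 d0)) (smult e (lin f 5 d1))) = 0"
    then have "a^2 * q 0 + e^2 * q 1 = 0" by (simp add: lin_comb QL d0_def d1_def)
    then show "a = 0 \<and> e = 0" by (rule anq)
  qed
  have Y0X: "Y0 \<in> ?X" unfolding Y0_def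
  proof (rule plane_in_X[OF qf two], intro allI impI)
    fix a e assume h: "Q (vadd (smult a (lin f 5 d0)) (smult e (lin f 5 d1r))) = 0"
    have "Q (vadd (smult a (lin f 5 d0)) (smult e (lin f 5 d1r))) = a^2 * q 0 + e^2 * q 1 + e^2 * (q 2 * xr^2 + q 3 * yr^2 + q 4)"
      unfolding lin_comb QL d0_def d1r_def by (simp, algebra)
    then have "a^2 * q 0 + e^2 * q 1 = 0" using h xy by simp
    then show "a = 0 \<and> e = 0" by (rule anq)
  qed
  have W2X: "W2 \<in> ?X" unfolding W2_def
  proof (rule plane_in_X[OF qf two], intro allI impI)
    fix a e assume h: "Q (vadd (smult a (lin f 5 pi1)) (smult e (lin f 5 pi2))) = 0"
    have "Q (vadd (smult a (lin f 5 pi1)) (smult e (lin f 5 pi2))) =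
       a^2 * (q 2 * x'^2 + q 3 * y'^2) + e^2 * ((q 2 * q 3 * (q 2 * x'^2 + q 3 * y'^2)) * s^2 + q 4 * t^2)"
      unfolding lin_comb QL pi1_def pi2_def by (simp, algebra)
    then have "a^2 * q 0 + e^2 * q 1 = 0" using h xy' st by simp
    then show "a = 0 \<and> e = 0" by (rule anq)
  qed
  have memX0: "y \<in> X0 \<Longrightarrow> \<exists>a e. y = lin f 5 (\<lambda>j. a * d0 j + e * d1 j)" for y
    unfolding X0_def by (rule span_lin_elem)
  have memY0: "y \<in> Y0 \<Longrightarrow> \<exists>a e. y = lin f 5 (\<lambda>j. a * d0 j + e * d1r j)" for y
    unfolding Y0_def by (rule span_lin_elem)
  have memW2: "y \<in> W2 \<Longrightarrow> \<exists>a e. y = lin f 5 (\<lambda>j. a * pi1 j + e * pi2 j)" for y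
    unfolding W2_def by (rule span_lin_elem)
  have Bd4: "bform Q (lin f 5 c) (lin f 5 d4) = 2 * c 4 * q 4" for c
    unfolding BL d4_def by simp
  have nz_of_d4: "lin f 5 c \<noteq> vzero" if "c 4 = 1" for c
  proof
    assume "lin f 5 c = vzero"
    then have "bform Q (lin f 5 c) (lin f 5 d4) = 0" by (simp add: B_zero_l[OF qf])
    then show False using Bd4[of c] that two q4 by simp
  qed
  have d0X0: "lin f 5 d0 \<in> X0" using mem_span_lin[of f 5 1 d0 0 d1] unfolding X0_def by simp
  have d0Y0: "lin f 5 d0 \<in> Y0" using mem_span_lin[of f 5 1 d0 0 d1r] unfolding Y0_def by simp
  have d0nz: "lin f 5 d0 \<noteq> vzero"
  proof
    assume "lin f 5 d0 = vzero"
    then have "Q (lin f 5 d0) = 0" by (simp add: Q_zero[OF qf])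
    then show False using qu0 q0 unfolding QL d0_def by simp
  qed
  have XY: "X0 \<noteq> Y0"
  proof
    assume eq: "X0 = Y0"
    have "lin f 5 d1r \<in> Y0" using mem_span_lin[of f 5 0 d0 1 d1r] unfolding Y0_def by simp
    then obtain a e where ae: "lin f 5 d1r = lin f 5 (\<lambda>j. a * d0 j + e * d1 j)" using memX0 eq by blast
    have "bform Q (lin f 5 d1r) (lin f 5 d4) = 2 * q 4" unfolding Bd4 d1r_def by simp
    moreover have "bform Q (lin f 5 (\<lambda>j. a * d0 j + e * d1 j)) (lin f 5 d4) = 0" unfolding Bd4 d0_def d1_def by simp
    ultimately show False using ae two q4 by simp
  qed
  define w where "w = lin f 5 (\<lambda>j. 0 * d0 j + (-1) * d1 j)"
  define z where "z = lin f 5 (\<lambda>j. 0 * d0 j + 1 * d1r j)"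
  have wX0: "w \<in> X0" unfolding w_def X0_def by (rule mem_span_lin)
  have zY0: "z \<in> Y0" unfolding z_def Y0_def by (rule mem_span_lin)
  have wz: "vadd w z = lin f 5 rho"
    unfolding w_def z_def lin_add by (rule arg_cong[where f="lin f 5"]) (auto simp: d0_def d1_def d1r_def rho_def)
  have rnz: "lin f 5 rho \<noteq> vzero" by (rule nz_of_d4) (simp add: rho_def)
  have rX0: "\<forall>y\<in>X0. bform Q (lin f 5 rho) y = 0"
  proof
    fix y assume "y \<in> X0"
    then obtain a e where "y = lin f 5 (\<lambda>j. a * d0 j + e * d1 j)" using memX0 by blast
    then show "bform Q (lin f 5 rho) y = 0" by (simp add: BL rho_def d0_def d1_def)
  qed
  have rY0: "\<forall>y\<in>Y0. bform Q (lin f 5 rho) y = 0"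
  proof
    fix y assume "y \<in> Y0"
    then obtain a e where ye: "y = lin f 5 (\<lambda>j. a * d0 j + e * d1r j)" using memY0 by blast
    have "bform Q (lin f 5 rho) y = 2 * e * (q 2 * xr^2 + q 3 * yr^2 + q 4)"
      unfolding ye BL rho_def d0_def d1r_def by (simp, algebra)
    then show "bform Q (lin f 5 rho) y = 0" using xy by simp
  qed
  have P0: "Prel Q X0 Y0"
    unfolding Prel_def
  proof (intro conjI)
    show "dimle2 X0" "dimle2 Y0" unfolding X0_def Y0_def by (rule span2_dimle2)+
    show "X0 \<noteq> Y0" by (rule XY)
    show "\<exists>x. x \<noteq> vzero \<and> x \<in> X0 \<and> x \<in> Y0" using d0X0 d0Y0 d0nz by blast
    show "\<exists>w\<in>X0. \<exists>z\<in>Y0. vadd w z \<noteq> vzero \<and> (\<forall>y\<in>X0. bform Q (vadd w z) y = 0) \<and> (\<forall>y\<in>Y0. bform Q (vadd w z) y = 0)"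
      using wX0 zY0 wz rnz rX0 rY0 by metis
  qed
  have perp: "\<forall>xx\<in>W2. \<forall>yy\<in>span2 (lin f 5 d0) (lin f 5 d1). bform Q xx yy = 0"
  proof (intro ballI)
    fix xx yy assume "xx \<in> W2" "yy \<in> span2 (lin f 5 d0) (lin f 5 d1)"
    then obtain a e a' e' where "xx = lin f 5 (\<lambda>j. a * pi1 j + e * pi2 j)" "yy = lin f 5 (\<lambda>j. a' * d0 j + e' * d1 j)"
      using memW2 memX0 unfolding X0_def by blast
    then show "bform Q xx yy = 0" by (simp add: BL pi1_def pi2_def d0_def d1_def)
  qed
  have ndX0: "nondeg_on Q (span2 (lin f 5 d0) (lin f 5 d1))" using X0X unfolding X0_def O2minus_spaces_def by blast
  have mtW2: "minus_type Q W2" using W2X unfolding O2minus_spaces_def by blast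
  note nc = no_common[OF qf two ndX0 mtW2 perp]
  have XW: "X0 \<noteq> W2"
  proof
    assume "X0 = W2"
    then have "\<forall>yy\<in>X0. bform Q (lin f 5 d0) yy = 0" using perp d0X0 unfolding X0_def by auto
    then have "lin f 5 d0 = vzero" using ndX0 d0X0 unfolding nondeg_on_def X0_def by blast
    then show False using d0nz by simp
  qed
  define E0 where "E0 = {{act g X0, act g Y0} | g. g \<in> H}"
  have E0orb: "E0 \<in> orbitals H ?X" unfolding E0_def orbitals_def using X0X Y0X XY by blast
  have edges: "Prel Q s t" if est: "{s, t} \<in> E0" for s t
  proof -
    obtain g where g: "g \<in> H" "{s, t} = {act g X0, act g Y0}" using est unfolding E0_def by blast
    have "semisimilarity Q g" using g(1) assms(5) by blast
    then have P: "Prel Q (act g X0) (act g Y0)" using P0 by (rule Prel_inv)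
    from g(2) have "(s = act g X0 \<and> t = act g Y0) \<or> (s = act g Y0 \<and> t = act g X0)"
      by (auto simp: doubleton_eq_iff)
    then show ?thesis using P Prel_sym by blast
  qed
  have "graph_dist E0 X0 W2 \<ge> 3"
  proof (rule dist_ge3[where R = "Prel Q"])
    show "\<And>s t. {s, t} \<in> E0 \<Longrightarrow> Prel Q s t" by (rule edges)
    show "X0 \<noteq> W2" by (rule XW)
    show "\<not> Prel Q X0 W2" using nc(1) unfolding X0_def .
    show "\<And>z. \<not> (Prel Q X0 z \<and> Prel Q z W2)" using nc(2) unfolding X0_def .
  qed
  also have "graph_dist E0 X0 W2 \<le> graph_diam ?X E0"
    unfolding graph_diam_def by (rule Sup_upper) (use X0X W2X in blast)
  also have "graph_diam ?X E0 \<le> diam_action H ?X"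
    unfolding diam_action_def by (rule Sup_upper) (use E0orb in blast)
  finally show ?thesis .
qed


end
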